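(* Let $\mathcal{Y}=\mathbb{R}$, $K\ge1$, $\alpha\in(0,1)$, let $(q_1,\dots,q_K)$ be a probability vector, and let $n_1,\dots,n_K\ge0$ be fixed integers with $n=\sum_k n_k$. For distributions $\Pi_1,\dots,\Pi_K$ on $\mathcal{X}^1\times\mathbb{R}$, consider calibration data $(X_1,Y_1),\dots,(X_n,Y_n)$ generated independently with, for each $k$ and each $i\in\{n_1+\dots+n_{k-1}+1,\dots,n_1+\dots+n_k\}$, $X_i^0=k$ and $(X_i^1,Y_i)\sim\Pi_k$, and an independent test point $(X_{n+1},Y_{n+1})$ with $\mathbb{P}\{X^0_{n+1}=k\}=q_k$ and $(X^1_{n+1},Y_{n+1})\mid X^0_{n+1}=k\sim\Pi_k$. Let $\widehat{C}_n$ be a prediction set procedure (a set $\widehat{C}_n(x)\subseteq\mathbb{R}$ constructed from the calibration data for each $x$) satisfying the distribution-free coverage guarantee $\mathbb{P}\{Y_{n+1}\in\widehat{C}_n(X_{n+1})\}\ge1-\alpha$ under this data-generating model for every choice of $\Pi_1,\dots,\Pi_K$. If $\sum_{k:\,n_k=0}q_k>\alpha$, then (for any $\Pi_1,\dots,\Pi_K$) $\mathbb{E}[\textnormal{Leb}(\widehat{C}_n(X_{n+1}))]=\infty$.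
   Context: Features are $x=(x^0,x^1)\in[K]\times\mathcal{X}^1$ with $x^0$ the group label. $\textnormal{Leb}$ denotes Lebesgue measure on $\mathbb{R}$. *)

theory Defs
  imports "HOL-Probability.Probability"
begin

text \<open>A data point is ((x0, x1), y) with x0 :: nat the group label (in 1..K),
  x1 in the measurable space M1 (the space X^1), and y real.\<close>

definition point_space :: "'x measure \<Rightarrow> ((nat \<times> 'x) \<times> real) measure" where
  "point_space M1 = (count_space UNIV \<Otimes>\<^sub>M M1) \<Otimes>\<^sub>M borel"

definition embed_grp :: "nat \<Rightarrow> 'x \<times> real \<Rightarrow> (nat \<times> 'x) \<times> real" where
  "embed_grp k = (\<lambda>(x1, y). ((k, x1), y))"

definition group_dist ::
  "'x measure \<Rightarrow> (nat \<Rightarrow> ('x \<times> real) measure) \<Rightarrow> nat \<Rightarrow> ((nat \<times> 'x) \<times> real) measure" where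
  "group_dist M1 P k = distr (P k) (point_space M1) (embed_grp k)"

definition test_dist ::
  "'x measure \<Rightarrow> nat \<Rightarrow> (nat \<Rightarrow> real) \<Rightarrow> (nat \<Rightarrow> ('x \<times> real) measure)
     \<Rightarrow> ((nat \<times> 'x) \<times> real) measure" where
  "test_dist M1 K q P = measure_of (space (point_space M1)) (sets (point_space M1))
     (\<lambda>A. \<Sum>k\<in>{1..K}. ennreal (q k) * emeasure (group_dist M1 P k) A)"

text \<open>Group of calibration index i (0-based): the k with
  n_1+...+n_{k-1} \<le> i < n_1+...+n_k.\<close>
definition grp :: "(nat \<Rightarrow> nat) \<Rightarrow> nat \<Rightarrow> nat" where
  "grp nk i = (LEAST k. i < (\<Sum>j\<in>{1..k}. nk j))"

definition cal_dist ::
  "'x measure \<Rightarrow> (nat \<Rightarrow> nat) \<Rightarrow> nat \<Rightarrow> (nat \<Rightarrow> ('x \<times> real) measure)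
     \<Rightarrow> (nat \<Rightarrow> (nat \<times> 'x) \<times> real) measure" where
  "cal_dist M1 nk n P = (\<Pi>\<^sub>M i\<in>{..<n}. group_dist M1 P (grp nk i))"

definition joint_dist ::
  "'x measure \<Rightarrow> nat \<Rightarrow> (nat \<Rightarrow> real) \<Rightarrow> (nat \<Rightarrow> nat) \<Rightarrow> nat \<Rightarrow> (nat \<Rightarrow> ('x \<times> real) measure)
     \<Rightarrow> ((nat \<Rightarrow> (nat \<times> 'x) \<times> real) \<times> ((nat \<times> 'x) \<times> real)) measure" where
  "joint_dist M1 K q nk n P = cal_dist M1 nk n P \<Otimes>\<^sub>M test_dist M1 K q P"

definition joint_space ::
  "'x measure \<Rightarrow> nat \<Rightarrow> ((nat \<Rightarrow> (nat \<times> 'x) \<times> real) \<times> ((nat \<times> 'x) \<times> real)) measure" where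
  "joint_space M1 n = (\<Pi>\<^sub>M i\<in>{..<n}. point_space M1) \<Otimes>\<^sub>M point_space M1"

definition valid_dists :: "'x measure \<Rightarrow> nat \<Rightarrow> (nat \<Rightarrow> ('x \<times> real) measure) \<Rightarrow> bool" where
  "valid_dists M1 K P \<longleftrightarrow>
     (\<forall>k\<in>{1..K}. prob_space (P k) \<and> sets (P k) = sets (M1 \<Otimes>\<^sub>M borel))"

end

theory Submission
  imports Defs
begin


lemma grp_nonzero:
  fixes nk :: "nat \<Rightarrow> nat"
  assumes "i < (\<Sum>k\<in>{1..K}. nk k)"
  shows "nk (grp nk i) \<noteq> 0"
proof -
  let ?S = "\<lambda>k. (\<Sum>j\<in>{1..k}. nk j)"
  have ex: "i < ?S (grp nk i)"
    unfolding grp_def using assms by (rule LeastI)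
  show ?thesis
  proof (cases "grp nk i")
    case 0 then show ?thesis using ex by simp
  next
    case (Suc m)
    have "\<not> i < ?S m"
      using not_less_Least[of m "\<lambda>k. i < ?S k"] Suc unfolding grp_def by simp
    moreover have "?S (Suc m) = ?S m + nk (Suc m)" by simp
    ultimately show ?thesis using ex Suc by auto
  qed
qed

lemma sets_group_dist[simp]: "sets (group_dist M1 P k) = sets (point_space M1)"
  by (simp add: group_dist_def)

lemma space_group_dist[simp]: "space (group_dist M1 P k) = space (point_space M1)"
  by (simp add: group_dist_def)

lemma space_point_space: "space (point_space M1) = (UNIV \<times> space M1) \<times> UNIV"
  by (simp add: point_space_def space_pair_measure)

lemma measurable_embed_grp:
  assumes "sets N = sets (M1 \<Otimes>\<^sub>M borel)"
  shows "embed_grp k \<in> measurable N (point_space M1)"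
proof -
  have "embed_grp k \<in> measurable (M1 \<Otimes>\<^sub>M borel) (point_space M1)"
    unfolding embed_grp_def point_space_def by measurable
  then show ?thesis using measurable_cong_sets[OF assms refl] by blast
qed

lemma sets_test_dist[simp]: "sets (test_dist M1 K q P) = sets (point_space M1)"
  unfolding test_dist_def by (simp add: sets.sigma_sets_eq sets.space_closed)

lemma space_test_dist[simp]: "space (test_dist M1 K q P) = space (point_space M1)"
  unfolding test_dist_def by simp

lemma emeasure_test_dist:
  assumes A: "A \<in> sets (point_space M1)"
  shows "emeasure (test_dist M1 K q P) A = (\<Sum>k\<in>{1..K}. ennreal (q k) * emeasure (group_dist M1 P k) A)"
  unfolding test_dist_def
proof (rule emeasure_measure_of_sigma[OF sets.sigma_algebra_axioms _ _ A])
  show "positive (sets (point_space M1)) (\<lambda>A. \<Sum>k\<in>{1..K}. ennreal (q k) * emeasure (group_dist M1 P k) A)"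
    by (simp add: positive_def)
  show "countably_additive (sets (point_space M1)) (\<lambda>A. \<Sum>k\<in>{1..K}. ennreal (q k) * emeasure (group_dist M1 P k) A)"
    unfolding countably_additive_def
  proof safe
    fix F :: "nat \<Rightarrow> _" assume F: "range F \<subseteq> sets (point_space M1)" "disjoint_family F"
    have "(\<Sum>i. \<Sum>k\<in>{1..K}. ennreal (q k) * emeasure (group_dist M1 P k) (F i))
       = (\<Sum>k\<in>{1..K}. \<Sum>i. ennreal (q k) * emeasure (group_dist M1 P k) (F i))"
      by (rule suminf_sum) simp
    also have "\<dots> = (\<Sum>k\<in>{1..K}. ennreal (q k) * emeasure (group_dist M1 P k) (\<Union>i. F i))"
      using F by (simp add: suminf_emeasure)
    finally show "(\<Sum>i. \<Sum>k\<in>{1..K}. ennreal (q k) * emeasure (group_dist M1 P k) (F i))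
       = (\<Sum>k\<in>{1..K}. ennreal (q k) * emeasure (group_dist M1 P k) (\<Union>i. F i))" .
  qed
qed

lemma prob_space_group_dist:
  assumes "prob_space (P k)" "sets (P k) = sets (M1 \<Otimes>\<^sub>M borel)"
  shows "prob_space (group_dist M1 P k)"
  unfolding group_dist_def
  by (rule prob_space.prob_space_distr[OF assms(1) measurable_embed_grp[OF assms(2)]])

lemma prob_space_test_dist:
  assumes P: "valid_dists M1 K P" and qn: "\<forall>k\<in>{1..K}. q k \<ge> 0" and qs: "(\<Sum>k\<in>{1..K}. q k) = 1"
  shows "prob_space (test_dist M1 K q P)"
proof
  have "emeasure (test_dist M1 K q P) (space (test_dist M1 K q P))
     = (\<Sum>k\<in>{1..K}. ennreal (q k) * emeasure (group_dist M1 P k) (space (point_space M1)))"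
    by (simp add: emeasure_test_dist)
  also have "\<dots> = (\<Sum>k\<in>{1..K}. ennreal (q k))"
  proof (rule sum.cong[OF refl])
    fix k assume k: "k \<in> {1..K}"
    then interpret prob_space "group_dist M1 P k"
      using P prob_space_group_dist unfolding valid_dists_def by blast
    show "ennreal (q k) * emeasure (group_dist M1 P k) (space (point_space M1)) = ennreal (q k)"
      using emeasure_space_1 by simp
  qed
  also have "\<dots> = ennreal (\<Sum>k\<in>{1..K}. q k)"
    using qn by (intro sum_ennreal) auto
  finally show "emeasure (test_dist M1 K q P) (space (test_dist M1 K q P)) = 1"
    using qs by simp
qed

lemma sets_cal_dist[simp]: "sets (cal_dist M1 nk n P) = sets (\<Pi>\<^sub>M i\<in>{..<n}. point_space M1)"
  unfolding cal_dist_def by (rule sets_PiM_cong) auto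

lemma prob_space_cal_dist:
  assumes P: "valid_dists M1 K P" and n: "n = (\<Sum>k\<in>{1..K}. nk k)"
  shows "prob_space (cal_dist M1 nk n P)"
  unfolding cal_dist_def
proof (rule prob_space_PiM)
  fix i assume "i \<in> {..<n}"
  then have i: "i < (\<Sum>k\<in>{1..K}. nk k)" using n by simp
  have "grp nk i \<in> {1..K}"
  proof -
    have ex: "i < (\<Sum>j\<in>{1..grp nk i}. nk j)"
      unfolding grp_def using i by (rule LeastI)
    have le: "grp nk i \<le> K" unfolding grp_def using i by (rule Least_le)
    have "grp nk i \<noteq> 0"
    proof
      assume "grp nk i = 0" with ex show False by simp
    qed
    then show ?thesis using le by simp
  qed
  then show "prob_space (group_dist M1 P (grp nk i))"
    using P prob_space_group_dist unfolding valid_dists_def by blast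
qed

lemma nn_integral_sum_measures:
  fixes M :: "'a measure" and N :: "nat \<Rightarrow> 'a measure" and c :: "nat \<Rightarrow> ennreal"
  assumes fin: "finite I" and sN: "\<And>k. k \<in> I \<Longrightarrow> sets (N k) = sets M"
    and em: "\<And>A. A \<in> sets M \<Longrightarrow> emeasure M A = (\<Sum>k\<in>I. c k * emeasure (N k) A)"
    and f: "f \<in> borel_measurable M"
  shows "integral\<^sup>N M f = (\<Sum>k\<in>I. c k * integral\<^sup>N (N k) f)"
  using f
proof induct
  case (cong f g)
  have "\<And>k. k \<in> I \<Longrightarrow> integral\<^sup>N (N k) f = integral\<^sup>N (N k) g"
    using cong.hyps(3) sets_eq_imp_space_eq[OF sN] by (intro nn_integral_cong) auto
  moreover have "integral\<^sup>N M f = integral\<^sup>N M g"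
    using cong.hyps(3) by (intro nn_integral_cong) auto
  ultimately show ?case using cong(4) by (metis (no_types, lifting) sum.cong)
next
  case (set A)
  have "\<And>k. k \<in> I \<Longrightarrow> integral\<^sup>N (N k) (indicator A) = emeasure (N k) A"
    using set sN by (intro nn_integral_indicator) auto
  then show ?case using set em by simp
next
  case (mult u c')
  have mu: "u \<in> borel_measurable (N k)" if "k \<in> I" for k
    by (subst measurable_cong_sets[OF sN[OF that] refl]) (rule mult(2))
  then have "\<And>k. k \<in> I \<Longrightarrow> c k * integral\<^sup>N (N k) (\<lambda>a. c' * u a) = c' * (c k * integral\<^sup>N (N k) u)"
    by (simp add: nn_integral_cmult ac_simps)
  then have "(\<Sum>k\<in>I. c k * integral\<^sup>N (N k) (\<lambda>a. c' * u a)) = c' * (\<Sum>k\<in>I. c k * integral\<^sup>N (N k) u)"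
    by (simp add: sum_distrib_left)
  moreover have "integral\<^sup>N M (\<lambda>a. c' * u a) = c' * integral\<^sup>N M u"
    using mult(2) by (rule nn_integral_cmult)
  ultimately show ?case using mult(4) by (simp only:)
next
  case (add u v)
  have mu: "u \<in> borel_measurable (N k)" "v \<in> borel_measurable (N k)" if "k \<in> I" for k
    by (subst measurable_cong_sets[OF sN[OF that] refl], rule add(1))
       (subst measurable_cong_sets[OF sN[OF that] refl], rule add(4))
  then have "\<And>k. k \<in> I \<Longrightarrow> c k * integral\<^sup>N (N k) (\<lambda>a. v a + u a) = c k * integral\<^sup>N (N k) v + c k * integral\<^sup>N (N k) u"
    by (simp add: nn_integral_add distrib_left)
  then have "(\<Sum>k\<in>I. c k * integral\<^sup>N (N k) (\<lambda>a. v a + u a)) = (\<Sum>k\<in>I. c k * integral\<^sup>N (N k) v) + (\<Sum>k\<in>I. c k * integral\<^sup>N (N k) u)"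
    by (simp add: sum.distrib)
  moreover have "integral\<^sup>N M (\<lambda>a. v a + u a) = integral\<^sup>N M v + integral\<^sup>N M u"
    using add(1) add(4) by (intro nn_integral_add) auto
  ultimately show ?case using add(3) add(7) by (simp only:)
next
  case (seq U)
  have mk: "U i \<in> borel_measurable (N k)" if "k \<in> I" for k i
    by (subst measurable_cong_sets[OF sN[OF that] refl]) (rule seq(1))
  have eqS: "(SUP i. U i) = (\<lambda>x. SUP i. U i x)"
    by (rule ext) (rule SUP_apply)
  have "integral\<^sup>N M (SUP i. U i) = (SUP i. integral\<^sup>N M (U i))"
    by (subst eqS, rule nn_integral_monotone_convergence_SUP[OF seq(4) seq(1)])
  also have "\<dots> = (SUP i. \<Sum>k\<in>I. c k * integral\<^sup>N (N k) (U i))"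
    using seq(3) by simp
  also have "\<dots> = (\<Sum>k\<in>I. SUP i. c k * integral\<^sup>N (N k) (U i))"
  proof (rule ennreal_SUP_sum)
    fix k assume "k \<in> I"
    show "incseq (\<lambda>i. c k * integral\<^sup>N (N k) (U i))"
      using seq(4) by (auto simp: incseq_def le_fun_def intro!: mult_left_mono nn_integral_mono)
  qed
  also have "\<dots> = (\<Sum>k\<in>I. c k * (SUP i. integral\<^sup>N (N k) (U i)))"
    by (simp add: SUP_mult_left_ennreal)
  also have "\<dots> = (\<Sum>k\<in>I. c k * integral\<^sup>N (N k) (SUP i. U i))"
    by (intro sum.cong refl arg_cong2[where f="(*)"], subst eqS,
        rule nn_integral_monotone_convergence_SUP[OF seq(4) mk, symmetric])
  finally show ?case .
qed



theorem proposition1: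
  fixes M1 :: "'x measure" and K n :: nat and \<alpha> :: real
    and q :: "nat \<Rightarrow> real" and nk :: "nat \<Rightarrow> nat"
    and C :: "(nat \<Rightarrow> (nat \<times> 'x) \<times> real) \<Rightarrow> (nat \<times> 'x) \<Rightarrow> real set"
    and P :: "nat \<Rightarrow> ('x \<times> real) measure"
  assumes K: "K \<ge> 1"
    and alpha: "0 < \<alpha>" "\<alpha> < 1"
    and q_nonneg: "\<forall>k\<in>{1..K}. q k \<ge> 0"
    and q_sum: "(\<Sum>k\<in>{1..K}. q k) = 1"
    and n_def: "n = (\<Sum>k\<in>{1..K}. nk k)"
    and C_meas: "{z \<in> space (joint_space M1 n). snd (snd z) \<in> C (fst z) (fst (snd z))}
                   \<in> sets (joint_space M1 n)"
    and coverage: "\<forall>P'. valid_dists M1 K P' \<longrightarrow>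
        measure (joint_dist M1 K q nk n P')
          {z \<in> space (joint_space M1 n). snd (snd z) \<in> C (fst z) (fst (snd z))} \<ge> 1 - \<alpha>"
    and zero_groups: "(\<Sum>k\<in>{k\<in>{1..K}. nk k = 0}. q k) > \<alpha>"
    and P: "valid_dists M1 K P"
  shows "(\<integral>\<^sup>+ z. emeasure lborel (C (fst z) (fst (snd z))) \<partial>joint_dist M1 K q nk n P) = \<infinity>"
proof -
  define PS where "PS = point_space M1"
  define PI where "PI = (\<Pi>\<^sub>M i\<in>{..<n}. PS)"
  define NN where "NN = PI \<Otimes>\<^sub>M (count_space (UNIV::nat set) \<Otimes>\<^sub>M M1)"
  define D where "D = cal_dist M1 nk n P"
  define T where "T = test_dist M1 K q P"
  define S where "S = {z \<in> space (joint_space M1 n). snd (snd z) \<in> C (fst z) (fst (snd z))}"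
  define Z where "Z = {k\<in>{1..K}. nk k = 0}"
  define NZ where "NZ = {k\<in>{1..K}. nk k \<noteq> 0}"
  define Q0 where "Q0 = (\<Sum>k\<in>Z. q k)"
  define marg where "marg k = distr (P k) M1 fst" for k
  define Lf where "Lf d x = emeasure lborel (C d x)" for d x
  define G where "G d = (\<Sum>k\<in>Z. ennreal (q k) * (\<integral>\<^sup>+ x1. Lf d (k, x1) \<partial>marg k))" for d
  define H where "H = (\<integral>\<^sup>+ d. G d \<partial>D)"

  have JS: "joint_space M1 n = PI \<Otimes>\<^sub>M PS"
    unfolding joint_space_def PI_def PS_def ..
  have sets_D: "sets D = sets PI" unfolding D_def PI_def PS_def by simp
  have space_D: "space D = space PI" using sets_D by (rule sets_eq_imp_space_eq)
  have sets_T: "sets T = sets PS" unfolding T_def PS_def by simp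
  have space_PS: "space PS = (UNIV \<times> space M1) \<times> UNIV"
    unfolding PS_def by (rule space_point_space)
  have PSdef: "PS = (count_space UNIV \<Otimes>\<^sub>M M1) \<Otimes>\<^sub>M borel"
    unfolding PS_def point_space_def ..
  have S_sets: "S \<in> sets (PI \<Otimes>\<^sub>M PS)" using C_meas unfolding S_def JS .
  have probD: "prob_space D" unfolding D_def using prob_space_cal_dist[OF P n_def] .
  have probT: "prob_space T" unfolding T_def using prob_space_test_dist[OF P q_nonneg q_sum] .
  interpret D: prob_space D by (rule probD)
  interpret T: prob_space T by (rule probT)
  have Pk: "prob_space (P k)" "sets (P k) = sets (M1 \<Otimes>\<^sub>M borel)" if "k \<in> {1..K}" for k
    using P that unfolding valid_dists_def by auto
  have fst_meas: "fst \<in> measurable (P k) M1" if "k \<in> {1..K}" for k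
    using measurable_cong_sets[OF Pk(2)[OF that] refl] measurable_fst by blast
  have sets_marg: "sets (marg k) = sets M1" for k unfolding marg_def by simp
  have space_marg: "space (marg k) = space M1" for k unfolding marg_def by simp
  have prob_marg: "prob_space (marg k)" if "k \<in> {1..K}" for k
    unfolding marg_def by (rule prob_space.prob_space_distr[OF Pk(1)[OF that] fst_meas[OF that]])

  define S2 where "S2 = (\<lambda>w. (fst (fst w), (snd (fst w), snd w))) -` S \<inter> space (NN \<Otimes>\<^sub>M (borel :: real measure))"
  have rm: "(\<lambda>w. (fst (fst w), (snd (fst w), snd w))) \<in> measurable (NN \<Otimes>\<^sub>M borel) (PI \<Otimes>\<^sub>M PS)"
    unfolding NN_def PSdef by measurable
  have "S2 \<in> sets (NN \<Otimes>\<^sub>M borel)"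
    unfolding S2_def using measurable_sets[OF rm S_sets] .
  moreover have "sets (NN \<Otimes>\<^sub>M lborel) = sets (NN \<Otimes>\<^sub>M borel)"
    by (rule sets_pair_measure_cong) simp_all
  ultimately have S2_sets: "S2 \<in> sets (NN \<Otimes>\<^sub>M lborel)" by simp
  have F_meas: "(\<lambda>w. emeasure lborel (Pair w -` S2)) \<in> borel_measurable NN"
    by (rule lborel.measurable_emeasure_Pair[OF S2_sets])
  have sec: "Pair (d, x) -` S2 = C d x" if "(d, x) \<in> space NN" for d x
  proof -
    have d: "d \<in> space PI" and x: "x \<in> UNIV \<times> space M1"
      using that unfolding NN_def by (auto simp: space_pair_measure)
    show ?thesis using d x unfolding S2_def S_def JS
      by (auto simp: space_pair_measure space_PS PSdef[symmetric] NN_def)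
  qed
  have LfN: "(\<lambda>w. Lf (fst w) (snd w)) \<in> borel_measurable NN"
    using F_meas by (rule measurable_cong[THEN iffD1, rotated]) (auto simp: Lf_def sec)
  have Lf_JS: "(\<lambda>z. Lf (fst z) (fst (snd z))) \<in> borel_measurable (PI \<Otimes>\<^sub>M PS)"
  proof -
    have "(\<lambda>z. (fst z, fst (snd z))) \<in> measurable (PI \<Otimes>\<^sub>M PS) NN"
      unfolding NN_def PSdef by measurable
    from measurable_comp[OF this LfN] show ?thesis by (simp add: comp_def)
  qed
  have sets_DT: "sets (D \<Otimes>\<^sub>M T) = sets (PI \<Otimes>\<^sub>M PS)"
    by (rule sets_pair_measure_cong[OF sets_D sets_T])
  have Lf_DT: "(\<lambda>z. Lf (fst z) (fst (snd z))) \<in> borel_measurable (D \<Otimes>\<^sub>M T)"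
    using Lf_JS measurable_cong_sets[OF sets_DT refl] by blast
  have Lf_k: "(\<lambda>w. Lf (fst w) (k, snd w)) \<in> borel_measurable (D \<Otimes>\<^sub>M marg k)" for k
  proof -
    have "sets (D \<Otimes>\<^sub>M marg k) = sets (PI \<Otimes>\<^sub>M M1)"
      by (rule sets_pair_measure_cong[OF sets_D sets_marg])
    moreover have "(\<lambda>w. (fst w, (k, snd w))) \<in> measurable (PI \<Otimes>\<^sub>M M1) NN"
      unfolding NN_def by measurable
    ultimately have "(\<lambda>w. (fst w, (k, snd w))) \<in> measurable (D \<Otimes>\<^sub>M marg k) NN"
      using measurable_cong_sets[OF _ refl] by blast
    from measurable_comp[OF this LfN] show ?thesis by (simp add: comp_def)
  qed
  have Lf_k1: "(\<lambda>x1. Lf d (k, x1)) \<in> borel_measurable (marg k)" if "d \<in> space D" for d k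
    using measurable_Pair2[OF Lf_k[of k] that] by simp
  have I_meas: "(\<lambda>d. \<integral>\<^sup>+ x1. Lf d (k, x1) \<partial>marg k) \<in> borel_measurable D" if "k \<in> {1..K}" for k
  proof -
    interpret Mk: prob_space "marg k" by (rule prob_marg[OF that])
    show ?thesis using Lf_k[of k] by (intro Mk.borel_measurable_nn_integral) (simp add: split_beta')
  qed
  have G_meas: "G \<in> borel_measurable D"
    unfolding G_def using I_meas Z_def by (intro borel_measurable_sum borel_measurable_times_ennreal) auto

  have target_ge: "H \<le> (\<integral>\<^sup>+ z. Lf (fst z) (fst (snd z)) \<partial>(D \<Otimes>\<^sub>M T))"
  proof -
    have "(\<integral>\<^sup>+ z. Lf (fst z) (fst (snd z)) \<partial>(D \<Otimes>\<^sub>M T)) = (\<integral>\<^sup>+ d. \<integral>\<^sup>+ p. Lf d (fst p) \<partial>T \<partial>D)"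
      using T.nn_integral_fst[OF Lf_DT] by simp
    moreover have "G d \<le> (\<integral>\<^sup>+ p. Lf d (fst p) \<partial>T)" if d: "d \<in> space D" for d
    proof -
      have fT: "(\<lambda>p. Lf d (fst p)) \<in> borel_measurable T"
        using measurable_Pair2[OF Lf_DT d] by simp
      have fPS: "(\<lambda>p. Lf d (fst p)) \<in> borel_measurable PS"
        using fT measurable_cong_sets[OF sets_T refl] by blast
      have "(\<integral>\<^sup>+ p. Lf d (fst p) \<partial>T) = (\<Sum>k\<in>{1..K}. ennreal (q k) * (\<integral>\<^sup>+ p. Lf d (fst p) \<partial>group_dist M1 P k))"
        unfolding T_def
        by (rule nn_integral_sum_measures[OF _ _ _ fT[unfolded T_def]])
           (auto simp: emeasure_test_dist)
      moreover have "(\<Sum>k\<in>Z. ennreal (q k) * (\<integral>\<^sup>+ p. Lf d (fst p) \<partial>group_dist M1 P k))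
          \<le> (\<Sum>k\<in>{1..K}. ennreal (q k) * (\<integral>\<^sup>+ p. Lf d (fst p) \<partial>group_dist M1 P k))"
        by (rule sum_mono2) (auto simp: Z_def)
      moreover have "(\<integral>\<^sup>+ p. Lf d (fst p) \<partial>group_dist M1 P k) = (\<integral>\<^sup>+ x1. Lf d (k, x1) \<partial>marg k)"
        if k: "k \<in> Z" for k
      proof -
        have k1: "k \<in> {1..K}" using k Z_def by auto
        have "(\<integral>\<^sup>+ p. Lf d (fst p) \<partial>group_dist M1 P k) = (\<integral>\<^sup>+ w. Lf d (fst (embed_grp k w)) \<partial>P k)"
          unfolding group_dist_def
          by (rule nn_integral_distr[OF measurable_embed_grp[OF Pk(2)[OF k1]]])
             (use fPS in \<open>simp add: PS_def\<close>)
        also have "\<dots> = (\<integral>\<^sup>+ w. Lf d (k, fst w) \<partial>P k)"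
          by (simp add: embed_grp_def split_beta')
        also have "\<dots> = (\<integral>\<^sup>+ x1. Lf d (k, x1) \<partial>marg k)"
          unfolding marg_def
          by (rule nn_integral_distr[symmetric, OF fst_meas[OF k1]])
             (use Lf_k1[OF d, of k] in \<open>simp add: marg_def\<close>)
        finally show ?thesis .
      qed
      ultimately show ?thesis unfolding G_def by simp
    qed
    then have "H \<le> (\<integral>\<^sup>+ d. \<integral>\<^sup>+ p. Lf d (fst p) \<partial>T \<partial>D)"
      unfolding H_def by (intro nn_integral_mono) auto
    ultimately show ?thesis by simp
  qed

  have key: "ennreal (1 - \<alpha>) \<le> ennreal (1 - Q0) + ennreal (1 / (2 * L)) * H" if L: "L > 0" for L
  proof -
    define c where "c = ennreal (1 / (2 * L))"
    define U where "U = uniform_measure lborel {-L..L}"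
    define P' where "P' k = (if k \<in> Z then marg k \<Otimes>\<^sub>M U else P k)" for k
    have LebI: "emeasure lborel {-L..L} = ennreal (2 * L)" using L by simp
    have probU: "prob_space U" unfolding U_def
      by (rule prob_space_uniform_measure) (use L LebI in auto)
    interpret U: prob_space U by (rule probU)
    have sets_U: "sets U = sets borel" unfolding U_def by simp
    have space_U: "space U = UNIV" unfolding U_def by simp
    have validP': "valid_dists M1 K P'"
      unfolding valid_dists_def
    proof
      fix k assume k: "k \<in> {1..K}"
      show "prob_space (P' k) \<and> sets (P' k) = sets (M1 \<Otimes>\<^sub>M borel)"
      proof (cases "k \<in> Z")
        case True
        then show ?thesis unfolding P'_def
          using prob_space_pair[OF prob_marg[OF k] probU] sets_pair_measure_cong[OF sets_marg sets_U]
          by simp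
      next
        case False
        then show ?thesis unfolding P'_def using Pk[OF k] by simp
      qed
    qed
    have calP': "cal_dist M1 nk n P' = D"
      unfolding D_def cal_dist_def
    proof (rule PiM_cong[OF refl])
      fix i assume "i \<in> {..<n}"
      then have "nk (grp nk i) \<noteq> 0" using grp_nonzero[of i nk K] n_def by simp
      then have "grp nk i \<notin> Z" unfolding Z_def by simp
      then show "group_dist M1 P' (grp nk i) = group_dist M1 P (grp nk i)"
        unfolding group_dist_def P'_def by simp
    qed
    define T' where "T' = test_dist M1 K q P'"
    have probT': "prob_space T'" unfolding T'_def using prob_space_test_dist[OF validP' q_nonneg q_sum] .
    interpret T': prob_space T' by (rule probT')
    have sets_T': "sets T' = sets PS" unfolding T'_def PS_def by simp
    have sets_DT': "sets (D \<Otimes>\<^sub>M T') = sets (PI \<Otimes>\<^sub>M PS)"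
      by (rule sets_pair_measure_cong[OF sets_D sets_T'])
    have S_DT': "S \<in> sets (D \<Otimes>\<^sub>M T')" using S_sets sets_DT' by simp
    have cov: "1 - \<alpha> \<le> measure (D \<Otimes>\<^sub>M T') S"
      using coverage[rule_format, OF validP'] unfolding joint_dist_def calP' T'_def[symmetric] S_def .
    interpret DT': prob_space "D \<Otimes>\<^sub>M T'" by (rule prob_space_pair[OF probD probT'])
    have bound: "emeasure T' (Pair d -` S) \<le> ennreal (1 - Q0) + c * G d" if d: "d \<in> space D" for d
    proof -
      define A where "A = Pair d -` S"
      have A: "A \<in> sets PS" unfolding A_def using sets_Pair1[OF S_sets] .
      have em: "emeasure T' A = (\<Sum>k\<in>{1..K}. ennreal (q k) * emeasure (group_dist M1 P' k) A)"
        unfolding T'_def using A by (simp add: emeasure_test_dist PS_def)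
      have split: "{1..K} = NZ \<union> Z" "NZ \<inter> Z = {}" "finite NZ" "finite Z"
        unfolding NZ_def Z_def by auto
      have NZpart: "(\<Sum>k\<in>NZ. ennreal (q k) * emeasure (group_dist M1 P' k) A) \<le> ennreal (1 - Q0)"
      proof -
        have "(\<Sum>k\<in>NZ. ennreal (q k) * emeasure (group_dist M1 P' k) A) \<le> (\<Sum>k\<in>NZ. ennreal (q k))"
        proof (rule sum_mono)
          fix k assume k: "k \<in> NZ"
          then have k1: "k \<in> {1..K}" and "k \<notin> Z" unfolding NZ_def Z_def by auto
          then have eqg: "group_dist M1 P' k = group_dist M1 P k" unfolding group_dist_def P'_def by simp
          interpret Gk: prob_space "group_dist M1 P k"
            using Pk[OF k1] by (rule prob_space_group_dist)
          have "emeasure (group_dist M1 P' k) A \<le> 1" using Gk.emeasure_le_1 eqg by simp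
          then show "ennreal (q k) * emeasure (group_dist M1 P' k) A \<le> ennreal (q k)"
            using mult_left_mono[of _ 1 "ennreal (q k)"] by simp
        qed
        also have "\<dots> = ennreal (\<Sum>k\<in>NZ. q k)"
          using q_nonneg unfolding NZ_def by (intro sum_ennreal) auto
        also have "(\<Sum>k\<in>NZ. q k) = 1 - Q0"
          using q_sum sum.union_disjoint[OF split(3) split(4) split(2), of q] split(1)
          unfolding Q0_def by simp
        finally show ?thesis .
      qed
      have Zpart: "ennreal (q k) * emeasure (group_dist M1 P' k) A
          \<le> ennreal (q k) * (c * (\<integral>\<^sup>+ x1. Lf d (k, x1) \<partial>marg k))" if k: "k \<in> Z" for k
      proof -
        have k1: "k \<in> {1..K}" using k Z_def by auto
        have P'k: "P' k = marg k \<Otimes>\<^sub>M U" unfolding P'_def using k by simp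
        have sets_P'k: "sets (marg k \<Otimes>\<^sub>M U) = sets (M1 \<Otimes>\<^sub>M borel)"
          by (rule sets_pair_measure_cong[OF sets_marg sets_U])
        have emb: "embed_grp k \<in> measurable (marg k \<Otimes>\<^sub>M U) (point_space M1)"
          by (rule measurable_embed_grp[OF sets_P'k])
        define E where "E = embed_grp k -` A \<inter> space (marg k \<Otimes>\<^sub>M U)"
        have E: "E \<in> sets (marg k \<Otimes>\<^sub>M U)"
          unfolding E_def using measurable_sets[OF emb A[unfolded PS_def]] .
        have "emeasure (group_dist M1 P' k) A = emeasure (marg k \<Otimes>\<^sub>M U) E"
          unfolding group_dist_def P'k E_def using A emb by (simp add: emeasure_distr PS_def)
        also have "\<dots> = (\<integral>\<^sup>+ x1. emeasure U (Pair x1 -` E) \<partial>marg k)"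
          by (rule U.emeasure_pair_measure_alt[OF E])
        also have "\<dots> \<le> (\<integral>\<^sup>+ x1. c * Lf d (k, x1) \<partial>marg k)"
        proof (rule nn_integral_mono)
          fix x1 assume x1: "x1 \<in> space (marg k)"
          have B: "Pair x1 -` E \<in> sets lborel"
            using sets_Pair1[OF E] sets_U by simp
          have Beq: "Pair x1 -` E = C d (k, x1)"
            using x1 d unfolding E_def A_def S_def JS embed_grp_def
            by (auto simp: space_pair_measure space_marg space_U space_PS space_D)
          have "emeasure U (Pair x1 -` E) = emeasure lborel ({-L..L} \<inter> Pair x1 -` E) / ennreal (2 * L)"
            unfolding U_def using B LebI by simp
          also have "\<dots> \<le> emeasure lborel (Pair x1 -` E) / ennreal (2 * L)"
            by (intro divide_right_mono_ennreal emeasure_mono B) auto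
          also have "\<dots> = c * Lf d (k, x1)"
          proof -
            have inv: "inverse (ennreal (2 * L)) = c"
              unfolding c_def using L by (subst inverse_ennreal) (auto simp: inverse_eq_divide)
            show ?thesis unfolding Lf_def Beq divide_ennreal_def inv by (rule mult.commute)
          qed
          finally show "emeasure U (Pair x1 -` E) \<le> c * Lf d (k, x1)" .
        qed
        also have "\<dots> = c * (\<integral>\<^sup>+ x1. Lf d (k, x1) \<partial>marg k)"
          by (rule nn_integral_cmult[OF Lf_k1[OF d]])
        finally show ?thesis by (rule mult_left_mono) simp
      qed
      have "emeasure T' A = (\<Sum>k\<in>NZ. ennreal (q k) * emeasure (group_dist M1 P' k) A)
          + (\<Sum>k\<in>Z. ennreal (q k) * emeasure (group_dist M1 P' k) A)"
        unfolding em split(1) by (rule sum.union_disjoint[OF split(3) split(4) split(2)])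
      also have "\<dots> \<le> ennreal (1 - Q0) + (\<Sum>k\<in>Z. ennreal (q k) * (c * (\<integral>\<^sup>+ x1. Lf d (k, x1) \<partial>marg k)))"
        by (intro add_mono NZpart sum_mono Zpart)
      also have "(\<Sum>k\<in>Z. ennreal (q k) * (c * (\<integral>\<^sup>+ x1. Lf d (k, x1) \<partial>marg k))) = c * G d"
        unfolding G_def by (simp add: sum_distrib_left mult.left_commute)
      finally show ?thesis unfolding A_def .
    qed
    have "ennreal (1 - \<alpha>) \<le> emeasure (D \<Otimes>\<^sub>M T') S"
      using cov by (simp add: DT'.emeasure_eq_measure ennreal_leI)
    also have "\<dots> = (\<integral>\<^sup>+ d. emeasure T' (Pair d -` S) \<partial>D)"
      by (rule T'.emeasure_pair_measure_alt[OF S_DT'])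
    also have "\<dots> \<le> (\<integral>\<^sup>+ d. (ennreal (1 - Q0) + c * G d) \<partial>D)"
      by (rule nn_integral_mono) (rule bound)
    also have "\<dots> = ennreal (1 - Q0) + c * H"
      using G_meas unfolding H_def
      by (simp add: nn_integral_add nn_integral_cmult D.emeasure_space_1)
    finally show ?thesis unfolding c_def .
  qed

  have Q0_gt: "Q0 > \<alpha>" using zero_groups unfolding Q0_def Z_def .
  have Q0_le: "Q0 \<le> 1"
  proof -
    have "Q0 \<le> (\<Sum>k\<in>{1..K}. q k)" unfolding Q0_def Z_def
      by (rule sum_mono2) (use q_nonneg in auto)
    then show ?thesis using q_sum by simp
  qed
  have H_inf: "H = \<infinity>"
  proof (rule ccontr)
    assume "H \<noteq> \<infinity>"
    then obtain h where h: "H = ennreal h" "0 \<le> h" by (cases H) auto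
    define L where "L = (h + 1) / (Q0 - \<alpha>)"
    have L0: "L > 0" unfolding L_def using Q0_gt h by simp
    have "ennreal (1 - \<alpha>) \<le> ennreal (1 - Q0 + h / (2 * L))"
      using key[OF L0] h L0 Q0_le
      by (simp add: ennreal_mult[symmetric] ennreal_plus[symmetric] del: ennreal_plus)
    then have "1 - \<alpha> \<le> 1 - Q0 + h / (2 * L)"
      using h L0 Q0_le by (subst (asm) ennreal_le_iff) auto
    moreover have "h / (2 * L) < Q0 - \<alpha>"
    proof -
      have eq: "h / (2 * L) = (Q0 - \<alpha>) * (h / (2 * (h + 1)))"
        unfolding L_def using Q0_gt h by (simp add: field_simps)
      have hlt: "h / (2 * (h + 1)) < 1" using h by simp
      have "(Q0 - \<alpha>) * (h / (2 * (h + 1))) < (Q0 - \<alpha>) * 1"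
        by (rule mult_strict_left_mono[OF hlt]) (use Q0_gt in simp)
      then have lt: "(Q0 - \<alpha>) * (h / (2 * (h + 1))) < Q0 - \<alpha>" by (simp only: mult_1_right)
      show ?thesis by (subst eq) (rule lt)
    qed
    ultimately show False by simp
  qed
  have "joint_dist M1 K q nk n P = D \<Otimes>\<^sub>M T"
    unfolding joint_dist_def D_def T_def ..
  then show ?thesis using target_ge H_inf unfolding Lf_def by (simp add: top_unique)
qed

end
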